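(* Let $\Delta,\Lambda\in\mathcal T_b$ with $\Delta\subset\Lambda^*$, let $\gamma_\Delta,\gamma_\Lambda$ be proper oriented kernels on $\Delta$ and $\Lambda$, and put $\Gamma=\Delta\cup\Lambda$. Then: (i) $\Gamma\in\mathcal T_b$, $\Gamma_+=\Delta_+\cup\Lambda_+$ and $\Gamma_-=\Delta_-\cup\Lambda_-$; (ii) the composition $\gamma_\Gamma:=\gamma_\Delta\gamma_\Lambda$ (defined on $\mathcal F_{S\setminus\Gamma_+}$ by $\gamma_\Gamma(A,\omega)=\int\gamma_\Lambda(A,\sigma)\gamma_\Delta(d\sigma,\omega)$) is well defined and is a proper oriented kernel on $\Gamma$; (iii) if $E$ is countable, then $\gamma_\Delta\gamma_\Lambda=\gamma_\Lambda\gamma_\Delta$.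
   Context: $(S,\le)$ is a countable partially ordered set. For $x\in S$ write $x_-=\{y\in S:y<x\}$, $x_+=\{y\in S:y>x\}$. For $\Upsilon\subset S$: $\max(\Upsilon)=\{x\in\Upsilon: y\notin\Upsilon\text{ for all }y>x\}$, $\min(\Upsilon)=\{x\in\Upsilon: y\notin\Upsilon\text{ for all }y<x\}$, the past $\Upsilon_-=\{x\in S\setminus\Upsilon:\exists y\in\Upsilon,\ x<y\}$, the future $\Upsilon_+=\{x\in S\setminus\Upsilon:\exists y\in\Upsilon,\ x>y\}$, and the outer time $\Upsilon^*=\{x\in S: x\text{ is comparable with no }y\in\Upsilon\}$. Standing assumptions: for every $x\in S$, $\max(x_-)$ and $\min(x_+)$ are finite, every $y<x$ satisfies $y\le y_0<x$ for some $y_0\in\max(x_-)$, every $z>x$ satisfies $z\ge z_0>x$ for some $z_0\in\min(x_+)$; and $S$ has no minimal element. A finite set $\Lambda\subset S$ is a time box if $\Lambda_-\cap\Lambda_+=\emptyset$; $\mathcal T_b$ is the set of time boxes. $(E,\mathcal E)$ is a measurable space, $\Omega=E^S$ with product $\sigma$-algebra $\mathcal F$; $\mathcal F_\Upsilon$ is generated by coordinates in $\Upsilon$. A proper oriented kernel on $\Lambda\in\mathcal T_b$ is a map $\gamma_\Lambda:\mathcal F_{S\setminus\Lambda_+}\times\Omega\to[0,1]$ such that (a) $\gamma_\Lambda(\cdot,\omega)$ is a probability measure for each $\omega$; (b) $\gamma_\Lambda(A,\cdot)$ is $\mathcal F_{\Lambda_-\cup\Lambda^*}$-measurable for each $A\in\mathcal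 F_{S\setminus\Lambda_+}$; (c) $\gamma_\Lambda(A,\cdot)$ is $\mathcal F_{\Lambda_-}$-measurable for each $A\in\mathcal F_\Lambda$; (d) $\gamma_\Lambda(B,\omega)=\mathbf 1_B(\omega)$ for all $B\in\mathcal F_{\Lambda_-\cup\Lambda^*}$. *)

theory Defs
  imports "HOL-Analysis.Analysis"
begin

definition past :: "'s::order set \<Rightarrow> 's set" where
  "past U = {x. x \<notin> U \<and> (\<exists>y\<in>U. x < y)}"

definition future :: "'s::order set \<Rightarrow> 's set" where
  "future U = {x. x \<notin> U \<and> (\<exists>y\<in>U. y < x)}"

definition outer :: "'s::order set \<Rightarrow> 's set" where
  "outer U = {x. \<forall>y\<in>U. \<not> (x \<le> y) \<and> \<not> (y \<le> x)}"

definition maxset :: "'s::order set \<Rightarrow> 's set" where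
  "maxset U = {x\<in>U. \<forall>y. x < y \<longrightarrow> y \<notin> U}"

definition minset :: "'s::order set \<Rightarrow> 's set" where
  "minset U = {x\<in>U. \<forall>y. y < x \<longrightarrow> y \<notin> U}"

definition standing :: "'s::order itself \<Rightarrow> bool" where
  "standing _ \<longleftrightarrow>
     countable (UNIV :: 's set) \<and>
     (\<forall>x::'s. finite (maxset {y. y < x}) \<and> finite (minset {z. x < z}) \<and>
        (\<forall>y. y < x \<longrightarrow> (\<exists>y0\<in>maxset {y. y < x}. y \<le> y0 \<and> y0 < x)) \<and>
        (\<forall>z. x < z \<longrightarrow> (\<exists>z0\<in>minset {z. x < z}. z0 \<le> z \<and> x < z0))) \<and>
     (\<forall>x::'s. \<exists>y. y < x)"

definition time_box :: "'s::order set \<Rightarrow> bool" where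
  "time_box L \<longleftrightarrow> finite L \<and> past L \<inter> future L = {}"

text \<open>Omega = E^S, where E = space M.\<close>
definition Omega :: "'e measure \<Rightarrow> ('s \<Rightarrow> 'e) set" where
  "Omega M = {\<omega>. \<forall>x. \<omega> x \<in> space M}"

definition coord_gen :: "'e measure \<Rightarrow> 's set \<Rightarrow> ('s \<Rightarrow> 'e) set set" where
  "coord_gen M U = {{\<omega>\<in>Omega M. \<omega> x \<in> A} | x A. x \<in> U \<and> A \<in> sets M}"

definition Fsig :: "'e measure \<Rightarrow> 's set \<Rightarrow> ('s \<Rightarrow> 'e) measure" where
  "Fsig M U = sigma (Omega M) (coord_gen M U)"

definition proper_oriented_kernel ::
  "'e measure \<Rightarrow> 's::order set \<Rightarrow> (('s \<Rightarrow> 'e) set \<Rightarrow> ('s \<Rightarrow> 'e) \<Rightarrow> real) \<Rightarrow> bool" where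
  "proper_oriented_kernel M L \<gamma> \<longleftrightarrow>
     (\<forall>\<omega>\<in>Omega M.
        measure_space (Omega M) (sets (Fsig M (- future L))) (\<lambda>A. ennreal (\<gamma> A \<omega>)) \<and>
        (\<forall>A\<in>sets (Fsig M (- future L)). 0 \<le> \<gamma> A \<omega> \<and> \<gamma> A \<omega> \<le> 1) \<and>
        \<gamma> (Omega M) \<omega> = 1) \<and>
     (\<forall>A\<in>sets (Fsig M (- future L)).
        (\<lambda>\<omega>. \<gamma> A \<omega>) \<in> borel_measurable (Fsig M (past L \<union> outer L))) \<and>
     (\<forall>A\<in>sets (Fsig M L).
        (\<lambda>\<omega>. \<gamma> A \<omega>) \<in> borel_measurable (Fsig M (past L))) \<and>
     (\<forall>B\<in>sets (Fsig M (past L \<union> outer L)). \<forall>\<omega>\<in>Omega M. \<gamma> B \<omega> = indicator B \<omega>)"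

definition kernel_measure ::
  "'e measure \<Rightarrow> 's::order set \<Rightarrow> (('s \<Rightarrow> 'e) set \<Rightarrow> ('s \<Rightarrow> 'e) \<Rightarrow> real) \<Rightarrow> ('s \<Rightarrow> 'e) \<Rightarrow> ('s \<Rightarrow> 'e) measure" where
  "kernel_measure M D \<gamma> \<omega> = measure_of (Omega M) (sets (Fsig M (- future D))) (\<lambda>B. ennreal (\<gamma> B \<omega>))"

definition kernel_comp ::
  "'e measure \<Rightarrow> 's::order set \<Rightarrow> (('s \<Rightarrow> 'e) set \<Rightarrow> ('s \<Rightarrow> 'e) \<Rightarrow> real)
     \<Rightarrow> (('s \<Rightarrow> 'e) set \<Rightarrow> ('s \<Rightarrow> 'e) \<Rightarrow> real) \<Rightarrow> ('s \<Rightarrow> 'e) set \<Rightarrow> ('s \<Rightarrow> 'e) \<Rightarrow> real" where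
  "kernel_comp M D \<gamma>D \<gamma>L A \<omega> = integral\<^sup>L (kernel_measure M D \<gamma>D \<omega>) (\<lambda>\<sigma>. \<gamma>L A \<sigma>)"

end

theory Submission
  imports Defs "HOL-Probability.Probability_Measure"
begin



lemma outer_sym: "D \<subseteq> outer L \<Longrightarrow> L \<subseteq> outer D"
  by (auto simp: outer_def)

lemma tb_pf: "time_box L \<Longrightarrow> x \<in> past L \<Longrightarrow> x \<notin> future L"
  by (auto simp: time_box_def)

lemma compl_future_minus: "(- future (L::'s::order set)) - L \<subseteq> past L \<union> outer L"
  unfolding past_def future_def outer_def
  by (auto simp: order.order_iff_strict)

lemma po_sub: "time_box L \<Longrightarrow> past L \<union> outer (L::'s::order set) \<subseteq> - future L"
  unfolding time_box_def past_def future_def outer_def by auto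

lemma self_nf: "(L::'s::order set) \<inter> future L = {}"
  unfolding future_def by auto

context
  fixes D L :: "'s::order set"
  assumes tD: "time_box D" and tL: "time_box L" and DL: "D \<subseteq> outer L"
begin

lemma fut_Un: "future (D \<union> L) = future D \<union> future L"
  using DL unfolding future_def outer_def by (auto dest: order.strict_implies_order)

lemma past_Un: "past (D \<union> L) = past D \<union> past L"
  using DL unfolding past_def outer_def by (auto dest: order.strict_implies_order)

lemma tb_Un: "time_box (D \<union> L)"
proof -
  have "past (D \<union> L) \<inter> future (D \<union> L) = {}"
  proof (rule ccontr)
    assume "past (D \<union> L) \<inter> future (D \<union> L) \<noteq> {}"
    then obtain x y z where x: "x \<notin> D \<union> L" "y \<in> D \<union> L" "x < y" "z \<in> D \<union> L" "z < x"
      unfolding past_def future_def by blast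
    have zy: "z < y" using x by auto
    show False
    proof (cases "y \<in> D")
      case True
      show False
      proof (cases "z \<in> D")
        case True
        then have "x \<in> past D \<inter> future D" using x \<open>y \<in> D\<close> unfolding past_def future_def by auto
        then show False using tD unfolding time_box_def by auto
      next
        case False
        then have "z \<in> L" using x by auto
        then show False using DL \<open>y \<in> D\<close> zy unfolding outer_def by (auto dest: order.strict_implies_order)
      qed
    next
      case False
      then have yL: "y \<in> L" using x by auto
      show False
      proof (cases "z \<in> L")
        case True
        then have "x \<in> past L \<inter> future L" using x yL unfolding past_def future_def by auto
        then show False using tL unfolding time_box_def by auto
      next
        case False
        then have "z \<in> D" using x by auto
        then show False using DL yL zy unfolding outer_def by (auto dest: order.strict_implies_order)
      qed
    qed
  qed
  then show ?thesis using tD tL unfolding time_box_def by auto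
qed

lemma L_nfG: "L \<subseteq> - future (D \<union> L)" and D_nfG: "D \<subseteq> - future (D \<union> L)"
  unfolding fut_Un using DL unfolding future_def outer_def
  by (auto dest: order.strict_implies_order)

lemma pastL_nfD: "past L \<subseteq> - future D"
proof
  fix x assume "x \<in> past L"
  then obtain l where l: "l \<in> L" "x < l" unfolding past_def by auto
  show "x \<in> - future D"
  proof
    assume "x \<in> future D"
    then obtain d where d: "d \<in> D" "d < x" unfolding future_def by auto
    have "d \<le> l" using l d by (meson order.strict_trans order.strict_implies_order)
    then show False using DL d l unfolding outer_def by auto
  qed
qed

lemma S3: "past L \<union> (- future (D \<union> L) - L) \<subseteq> - future D"
  using pastL_nfD fut_Un by auto

lemma S4: "past D \<union> ((D \<union> (past L \<union> (- future (D \<union> L) - L))) - D) \<subseteq> past (D \<union> L) \<union> outer (D \<union> L)"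
proof -
  have a: "past L - D \<subseteq> past (D \<union> L)" using past_Un by auto
  have b: "- future (D \<union> L) - L - D \<subseteq> past (D \<union> L) \<union> outer (D \<union> L)"
    using compl_future_minus[of "D \<union> L"] by auto
  show ?thesis using a b past_Un by auto
qed

lemma S5: "D \<union> L \<subseteq> - future L"
  using D_nfG fut_Un self_nf[of L] by auto

lemma S6: "D \<union> (past L \<union> ((D \<union> L) - L)) \<subseteq> - future D"
  using pastL_nfD self_nf[of D] by auto

lemma S7: "past D \<union> ((D \<union> (past L \<union> ((D \<union> L) - L))) - D) \<subseteq> past (D \<union> L)"
  using past_Un by auto

lemma S8: "past (D \<union> L) \<union> outer (D \<union> L) \<subseteq> past L \<union> outer L"
proof -
  have "past (D \<union> L) \<union> outer (D \<union> L) \<subseteq> - future (D \<union> L) - (D \<union> L)"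
    using po_sub[OF tb_Un] unfolding past_def outer_def by auto
  also have "\<dots> \<subseteq> - future L - L" using fut_Un by auto
  also have "\<dots> \<subseteq> past L \<union> outer L" by (rule compl_future_minus)
  finally show ?thesis .
qed

lemma D_po: "D \<subseteq> past L \<union> outer L" using DL by auto

lemma VG_po: "- future (D \<union> L) - (D \<union> L) \<subseteq> past L \<union> outer L"
  using compl_future_minus[of L] fut_Un by auto

end



lemma coord_gen_Pow: "coord_gen M U \<subseteq> Pow (Omega M)"
  unfolding coord_gen_def by auto

lemma sets_Fsig: "sets (Fsig M U) = sigma_sets (Omega M) (coord_gen M U)"
  unfolding Fsig_def by (rule sets_measure_of[OF coord_gen_Pow])

lemma space_Fsig[simp]: "space (Fsig M U) = Omega M"
  unfolding Fsig_def by (rule space_measure_of[OF coord_gen_Pow])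

lemma coord_gen_mono: "U \<subseteq> V \<Longrightarrow> coord_gen M U \<subseteq> coord_gen M V"
  unfolding coord_gen_def by blast

lemma Fsig_mono: "U \<subseteq> V \<Longrightarrow> sets (Fsig M U) \<subseteq> sets (Fsig M V)"
  unfolding sets_Fsig by (rule sigma_sets_mono'[OF coord_gen_mono])

lemma meas_mono_sets:
  assumes "f \<in> borel_measurable N" "sets N \<subseteq> sets N'" "space N = space N'"
  shows "f \<in> borel_measurable N'"
  using measurable_mono[of borel borel N N'] assms by auto

lemma meas_mono: "f \<in> borel_measurable (Fsig M U) \<Longrightarrow> U \<subseteq> V \<Longrightarrow> f \<in> borel_measurable (Fsig M V)"
  by (rule meas_mono_sets[OF _ Fsig_mono]) auto

lemma Omega_in[simp]: "Omega M \<in> sets (Fsig M U)"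
  using sets.top[of "Fsig M U"] by simp

definition R3 :: "'e measure \<Rightarrow> 's set \<Rightarrow> 's set \<Rightarrow> 's set \<Rightarrow> ('s \<Rightarrow> 'e) set set" where
  "R3 M U1 U2 U3 = {a \<inter> b \<inter> c | a b c. a \<in> sets (Fsig M U1) \<and> b \<in> sets (Fsig M U2) \<and> c \<in> sets (Fsig M U3)}"

lemma R3I: "a \<in> sets (Fsig M U1) \<Longrightarrow> b \<in> sets (Fsig M U2) \<Longrightarrow> c \<in> sets (Fsig M U3) \<Longrightarrow> a \<inter> b \<inter> c \<in> R3 M U1 U2 U3"
  unfolding R3_def by blast

lemma R3E: "X \<in> R3 M U1 U2 U3 \<Longrightarrow> (\<And>a b c. X = a \<inter> b \<inter> c \<Longrightarrow> a \<in> sets (Fsig M U1) \<Longrightarrow> b \<in> sets (Fsig M U2) \<Longrightarrow> c \<in> sets (Fsig M U3) \<Longrightarrow> P) \<Longrightarrow> P"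
  unfolding R3_def by blast

lemma R3_Pow: "R3 M U1 U2 U3 \<subseteq> Pow (Omega M)"
proof
  fix X assume "X \<in> R3 M U1 U2 U3"
  then obtain a b c where X: "X = a \<inter> b \<inter> c" "a \<in> sets (Fsig M U1)" by (rule R3E)
  have "a \<subseteq> Omega M" using sets.sets_into_space[OF X(2)] by simp
  then show "X \<in> Pow (Omega M)" using X(1) by blast
qed

lemma R3_Int_stable: "Int_stable (R3 M U1 U2 U3)"
  unfolding Int_stable_def
proof (intro ballI)
  fix X Y assume "X \<in> R3 M U1 U2 U3" "Y \<in> R3 M U1 U2 U3"
  then obtain a b c a' b' c' where h: "X = a \<inter> b \<inter> c" "a \<in> sets (Fsig M U1)" "b \<in> sets (Fsig M U2)" "c \<in> sets (Fsig M U3)"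
    "Y = a' \<inter> b' \<inter> c'" "a' \<in> sets (Fsig M U1)" "b' \<in> sets (Fsig M U2)" "c' \<in> sets (Fsig M U3)"
    by (metis R3E)
  have "X \<inter> Y = (a \<inter> a') \<inter> (b \<inter> b') \<inter> (c \<inter> c')" using h by blast
  moreover have "(a \<inter> a') \<inter> (b \<inter> b') \<inter> (c \<inter> c') \<in> R3 M U1 U2 U3"
    by (rule R3I) (use h in \<open>simp_all add: sets.Int\<close>)
  ultimately show "X \<inter> Y \<in> R3 M U1 U2 U3" by simp
qed

lemma R3_gen: "sets (Fsig M (U1 \<union> U2 \<union> U3)) = sigma_sets (Omega M) (R3 M U1 U2 U3)"
proof
  have "coord_gen M (U1 \<union> U2 \<union> U3) \<subseteq> R3 M U1 U2 U3"
  proof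
    fix g assume "g \<in> coord_gen M (U1 \<union> U2 \<union> U3)"
    then obtain x A where g: "g = {\<omega>\<in>Omega M. \<omega> x \<in> A}" "x \<in> U1 \<union> U2 \<union> U3" "A \<in> sets M"
      unfolding coord_gen_def by blast
    have gsub: "g \<inter> Omega M = g" "Omega M \<inter> g = g" using g by auto
    have *: "g \<in> sets (Fsig M U)" if "x \<in> U" for U
    proof -
      have "g \<in> coord_gen M U" using g that unfolding coord_gen_def by blast
      then show ?thesis unfolding sets_Fsig by (rule sigma_sets.Basic)
    qed
    show "g \<in> R3 M U1 U2 U3" using g(2)
    proof (elim UnE)
      assume "x \<in> U1" then show ?thesis using R3I[OF *[of U1] Omega_in Omega_in] gsub by simp
    next
      assume "x \<in> U2" then show ?thesis using R3I[OF Omega_in *[of U2] Omega_in] gsub by simp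
    next
      assume "x \<in> U3" then show ?thesis using R3I[OF Omega_in Omega_in *[of U3]] gsub by (simp add: Int_commute)
    qed
  qed
  then show "sets (Fsig M (U1 \<union> U2 \<union> U3)) \<subseteq> sigma_sets (Omega M) (R3 M U1 U2 U3)"
    unfolding sets_Fsig by (rule sigma_sets_mono')
next
  have "R3 M U1 U2 U3 \<subseteq> sets (Fsig M (U1 \<union> U2 \<union> U3))"
  proof
    fix X assume "X \<in> R3 M U1 U2 U3"
    then obtain a b c where X: "X = a \<inter> b \<inter> c" "a \<in> sets (Fsig M U1)" "b \<in> sets (Fsig M U2)" "c \<in> sets (Fsig M U3)"
      by (rule R3E)
    have "a \<in> sets (Fsig M (U1 \<union> U2 \<union> U3))" by (rule subsetD[OF Fsig_mono X(2)]) blast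
    moreover have "b \<in> sets (Fsig M (U1 \<union> U2 \<union> U3))" by (rule subsetD[OF Fsig_mono X(3)]) blast
    moreover have "c \<in> sets (Fsig M (U1 \<union> U2 \<union> U3))" by (rule subsetD[OF Fsig_mono X(4)]) blast
    ultimately show "X \<in> sets (Fsig M (U1 \<union> U2 \<union> U3))" using X(1) by (simp add: sets.Int)
  qed
  then have "sigma_sets (Omega M) (R3 M U1 U2 U3) \<subseteq> sigma_sets (Omega M) (sets (Fsig M (U1 \<union> U2 \<union> U3)))"
    by (rule sigma_sets_mono')
  also have "\<dots> = sets (Fsig M (U1 \<union> U2 \<union> U3))"
    using sets.sigma_sets_eq[of "Fsig M (U1 \<union> U2 \<union> U3)"] by simp
  finally show "sigma_sets (Omega M) (R3 M U1 U2 U3) \<subseteq> sets (Fsig M (U1 \<union> U2 \<union> U3))" .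
qed




lemma meas_cong': "(\<And>w. w \<in> space N \<Longrightarrow> f w = g w) \<Longrightarrow> g \<in> borel_measurable N \<Longrightarrow> f \<in> borel_measurable N"
  using measurable_cong by metis

context
  fixes M :: "'e measure" and L :: "'s::order set" and \<gamma> :: "('s \<Rightarrow> 'e) set \<Rightarrow> ('s \<Rightarrow> 'e) \<Rightarrow> real"
  assumes tL: "time_box L" and K: "proper_oriented_kernel M L \<gamma>"
begin

lemma K1: "\<omega> \<in> Omega M \<Longrightarrow> measure_space (Omega M) (sets (Fsig M (- future L))) (\<lambda>A. ennreal (\<gamma> A \<omega>))"
  using K unfolding proper_oriented_kernel_def by auto
lemma K2: "\<omega> \<in> Omega M \<Longrightarrow> A \<in> sets (Fsig M (- future L)) \<Longrightarrow> 0 \<le> \<gamma> A \<omega> \<and> \<gamma> A \<omega> \<le> 1"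
  using K unfolding proper_oriented_kernel_def by auto
lemma K3: "\<omega> \<in> Omega M \<Longrightarrow> \<gamma> (Omega M) \<omega> = 1"
  using K unfolding proper_oriented_kernel_def by auto
lemma K4: "A \<in> sets (Fsig M (- future L)) \<Longrightarrow> (\<lambda>\<omega>. \<gamma> A \<omega>) \<in> borel_measurable (Fsig M (past L \<union> outer L))"
  using K unfolding proper_oriented_kernel_def by auto
lemma K5: "A \<in> sets (Fsig M L) \<Longrightarrow> (\<lambda>\<omega>. \<gamma> A \<omega>) \<in> borel_measurable (Fsig M (past L))"
  using K unfolding proper_oriented_kernel_def by auto
lemma K6: "B \<in> sets (Fsig M (past L \<union> outer L)) \<Longrightarrow> \<omega> \<in> Omega M \<Longrightarrow> \<gamma> B \<omega> = indicator B \<omega>"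
  using K unfolding proper_oriented_kernel_def by auto

lemma po_fut: "sets (Fsig M (past L \<union> outer L)) \<subseteq> sets (Fsig M (- future L))"
  by (rule Fsig_mono[OF po_sub[OF tL]])

lemma L_fut: "sets (Fsig M L) \<subseteq> sets (Fsig M (- future L))"
  by (rule Fsig_mono) (use self_nf[of L] in auto)

lemma KM_sets[simp]: "sets (kernel_measure M L \<gamma> \<omega>) = sets (Fsig M (- future L))"
  unfolding kernel_measure_def
  using sets_measure_of[OF sets.space_closed[of "Fsig M (- future L)"]]
    sets.sigma_sets_eq[of "Fsig M (- future L)"] by simp

lemma KM_space[simp]: "space (kernel_measure M L \<gamma> \<omega>) = Omega M"
  unfolding kernel_measure_def
  using space_measure_of[OF sets.space_closed[of "Fsig M (- future L)"]] by simp

lemma KM_em: "\<omega> \<in> Omega M \<Longrightarrow> A \<in> sets (Fsig M (- future L)) \<Longrightarrow> emeasure (kernel_measure M L \<gamma> \<omega>) A = ennreal (\<gamma> A \<omega>)"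
  unfolding kernel_measure_def
  using K1 by (intro emeasure_measure_of_sigma) (auto simp: measure_space_def)

lemma KM_meas: "\<omega> \<in> Omega M \<Longrightarrow> A \<in> sets (Fsig M (- future L)) \<Longrightarrow> measure (kernel_measure M L \<gamma> \<omega>) A = \<gamma> A \<omega>"
  unfolding measure_def using KM_em K2 by simp

lemma KM_prob: "\<omega> \<in> Omega M \<Longrightarrow> prob_space (kernel_measure M L \<gamma> \<omega>)"
  by (rule prob_spaceI) (simp add: KM_em K3)

lemma KM_AE:
  fixes f :: "('s \<Rightarrow> 'e) \<Rightarrow> real"
  assumes f: "f \<in> borel_measurable (Fsig M (past L \<union> outer L))" and w: "\<omega> \<in> Omega M"
  shows "AE \<sigma> in kernel_measure M L \<gamma> \<omega>. f \<sigma> = f \<omega>"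
proof -
  interpret P: prob_space "kernel_measure M L \<gamma> \<omega>" by (rule KM_prob[OF w])
  define B where "B = f -` {f \<omega>} \<inter> Omega M"
  have B: "B \<in> sets (Fsig M (past L \<union> outer L))"
    unfolding B_def using measurable_sets[OF f borel_closed[OF closed_singleton], of "f \<omega>"] by simp
  have "\<omega> \<in> B" using w unfolding B_def by auto
  then have "\<gamma> B \<omega> = 1" using K6[OF B w] by simp
  then have "P.prob B = 1" using KM_meas[OF w] B po_fut by auto
  then have "AE \<sigma> in kernel_measure M L \<gamma> \<omega>. \<sigma> \<in> B" by (rule P.AE_prob_1)
  then show ?thesis by eventually_elim (auto simp: B_def)
qed

lemma KM_prod:
  assumes A: "A \<in> sets (Fsig M (- future L))" and B: "B \<in> sets (Fsig M (past L \<union> outer L))"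
    and w: "\<omega> \<in> Omega M"
  shows "\<gamma> (A \<inter> B) \<omega> = \<gamma> A \<omega> * indicator B \<omega>"
proof -
  interpret P: prob_space "kernel_measure M L \<gamma> \<omega>" by (rule KM_prob[OF w])
  have Bf: "B \<in> sets (Fsig M (- future L))" using B po_fut by auto
  have AB: "A \<inter> B \<in> sets (Fsig M (- future L))" using A Bf by auto
  show ?thesis
  proof (cases "\<omega> \<in> B")
    case True
    have C: "Omega M - B \<in> sets (Fsig M (past L \<union> outer L))" using B by auto
    then have "\<gamma> (Omega M - B) \<omega> = 0" using K6[OF C w] True by simp
    then have "Omega M - B \<in> null_sets (kernel_measure M L \<gamma> \<omega>)"
      using C po_fut KM_em[OF w] by (auto simp: null_sets_def)
    then have "P.prob (A - (Omega M - B)) = P.prob A"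
      using A by (intro measure_Diff_null_set) auto
    moreover have "A - (Omega M - B) = A \<inter> B"
      using sets.sets_into_space[OF A] by auto
    ultimately show ?thesis using True KM_meas[OF w] A AB by simp
  next
    case False
    have "\<gamma> B \<omega> = 0" using K6[OF B w] False by simp
    moreover have "P.prob (A \<inter> B) \<le> P.prob B"
      using Bf by (intro P.finite_measure_mono) auto
    ultimately have "\<gamma> (A \<inter> B) \<omega> \<le> 0" using KM_meas[OF w] AB Bf by simp
    moreover have "0 \<le> \<gamma> (A \<inter> B) \<omega>" using K2[OF w AB] by simp
    ultimately show ?thesis using False by simp
  qed
qed

lemma KD:
  assumes U1: "L \<subseteq> U" and U2: "U \<subseteq> - future L" and A: "A \<in> sets (Fsig M U)"
  shows "(\<lambda>\<omega>. \<gamma> A \<omega>) \<in> borel_measurable (Fsig M (past L \<union> (U - L)))"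
proof -
  let ?Y = "Fsig M (past L \<union> (U - L))"
  have Ueq: "U = L \<union> (U - L) \<union> {}" using U1 by auto
  have UsubF: "sets (Fsig M U) \<subseteq> sets (Fsig M (- future L))" using Fsig_mono[OF U2] .
  have ULpo: "U - L \<subseteq> past L \<union> outer L" using U2 compl_future_minus[of L] by auto
  have mem: "A \<in> sigma_sets (Omega M) (R3 M L (U - L) {})"
    using A R3_gen[of M L "U - L" "{}"] Ueq by simp
  show ?thesis using R3_Int_stable[of M L "U - L" "{}"] R3_Pow[of M L "U - L" "{}"] mem
  proof (induct A rule: sigma_sets_induct_disjoint)
    case (basic X)
    then obtain a b c where X: "X = a \<inter> b \<inter> c" "a \<in> sets (Fsig M L)" "b \<in> sets (Fsig M (U - L))"
      "c \<in> sets (Fsig M {})" unfolding R3_def by auto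
    have c: "c \<in> sets (Fsig M (U - L))" using X(4) Fsig_mono[of "{}" "U - L" M] by auto
    have bc: "b \<inter> c \<in> sets (Fsig M (U - L))" using X(3) c by auto
    have bcpo: "b \<inter> c \<in> sets (Fsig M (past L \<union> outer L))" using bc Fsig_mono[OF ULpo] by auto
    have aF: "a \<in> sets (Fsig M (- future L))" using X(2) L_fut by auto
    have eq: "\<gamma> X \<omega> = \<gamma> a \<omega> * indicator (b \<inter> c) \<omega>" if "\<omega> \<in> space ?Y" for \<omega>
      using KM_prod[OF aF bcpo] that X(1) by (simp add: Int_assoc)
    have m1: "(\<lambda>\<omega>. \<gamma> a \<omega>) \<in> borel_measurable ?Y" using meas_mono[OF K5[OF X(2)]] by auto
    have m2: "(indicator (b \<inter> c) :: _ \<Rightarrow> real) \<in> borel_measurable ?Y"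
      using bc Fsig_mono[of "U - L" "past L \<union> (U - L)" M] by (intro borel_measurable_indicator) auto
    show ?case
      by (rule meas_cong'[where g="\<lambda>\<omega>. \<gamma> a \<omega> * indicator (b \<inter> c) \<omega>"]) (use eq m1 m2 in auto)
  next
    case empty
    have eq: "\<gamma> {} \<omega> = 0" if "\<omega> \<in> space ?Y" for \<omega>
      using KM_meas[of \<omega> "{}"] that by simp
    show ?case by (rule meas_cong'[where g="\<lambda>\<omega>. 0"]) (use eq in auto)
  next
    case (compl X)
    then have XF: "X \<in> sets (Fsig M (- future L))" using R3_gen[of M L "U - L" "{}"] Ueq UsubF by auto
    have eq: "\<gamma> (Omega M - X) \<omega> = 1 - \<gamma> X \<omega>" if "\<omega> \<in> space ?Y" for \<omega>
    proof -
      interpret P: prob_space "kernel_measure M L \<gamma> \<omega>" using KM_prob that by simp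
      have "Omega M - X \<in> sets (Fsig M (- future L))" using sets.Diff[OF Omega_in XF] .
      then show ?thesis using P.prob_compl[of X] XF KM_meas[of \<omega> "Omega M - X"] KM_meas[of \<omega> X] that by auto
    qed
    show ?case by (rule meas_cong'[where g="\<lambda>\<omega>. 1 - \<gamma> X \<omega>"]) (use eq compl in auto)
  next
    case (union A)
    have "sigma_sets (Omega M) (R3 M L (U - L) {}) \<subseteq> sets (Fsig M (- future L))"
      using R3_gen[of M L "U - L" "{}"] Ueq UsubF by auto
    then have AF: "\<And>i. A i \<in> sets (Fsig M (- future L))" using union(2) by blast
    have UF: "(\<Union>i. A i) \<in> sets (Fsig M (- future L))" using AF by (intro sets.countable_UN) auto
    have lim: "(\<lambda>n. \<Sum>i<n. \<gamma> (A i) \<omega>) \<longlonglongrightarrow> \<gamma> (\<Union>i. A i) \<omega>" if "\<omega> \<in> space ?Y" for \<omega>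
    proof -
      interpret P: prob_space "kernel_measure M L \<gamma> \<omega>" using KM_prob that by simp
      have "(\<lambda>i. P.prob (A i)) sums P.prob (\<Union>i. A i)"
        using AF union(1) by (intro P.finite_measure_UNION) auto
      then have "(\<lambda>i. \<gamma> (A i) \<omega>) sums \<gamma> (\<Union>i. A i) \<omega>" using KM_meas AF UF that by simp
      then show ?thesis by (simp add: sums_def)
    qed
    have m: "(\<lambda>\<omega>. \<Sum>i<n. \<gamma> (A i) \<omega>) \<in> borel_measurable ?Y" for n
      by (rule borel_measurable_sum) (rule union(3))
    show ?case
      by (rule borel_measurable_LIMSEQ_metric[OF m lim])
  qed
qed

end



context
  fixes M :: "'e measure" and L :: "'s::order set" and \<gamma> :: "('s \<Rightarrow> 'e) set \<Rightarrow> ('s \<Rightarrow> 'e) \<Rightarrow> real"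
  assumes tL: "time_box L" and K: "proper_oriented_kernel M L \<gamma>"
begin

lemma KZ_meas:
  assumes Z2: "Z \<subseteq> - future L" and g: "g \<in> borel_measurable (Fsig M Z)"
  shows "g \<in> borel_measurable (kernel_measure M L \<gamma> \<omega>)"
  by (rule meas_mono_sets[OF g]) (use Fsig_mono[OF Z2] KM_sets[OF tL K] KM_space[OF tL K] in auto)

lemma KI_nn:
  fixes g :: "('s \<Rightarrow> 'e) \<Rightarrow> ennreal"
  assumes Z1: "L \<subseteq> Z" and Z2: "Z \<subseteq> - future L" and g: "g \<in> borel_measurable (Fsig M Z)"
  shows "(\<lambda>\<omega>. \<integral>\<^sup>+\<sigma>. g \<sigma> \<partial>kernel_measure M L \<gamma> \<omega>) \<in> borel_measurable (Fsig M (past L \<union> (Z - L)))"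
  using g
proof (induction rule: borel_measurable_induct)
  case (cong f g)
  have "\<And>\<omega>. (\<integral>\<^sup>+\<sigma>. f \<sigma> \<partial>kernel_measure M L \<gamma> \<omega>) = (\<integral>\<^sup>+\<sigma>. g \<sigma> \<partial>kernel_measure M L \<gamma> \<omega>)"
    by (intro nn_integral_cong) (use cong(3) KM_space[OF tL K] in auto)
  then show ?case using cong(4) by simp
next
  case (set A)
  have AF: "A \<in> sets (Fsig M (- future L))" using set Fsig_mono[OF Z2] by auto
  have eq: "(\<integral>\<^sup>+\<sigma>. indicator A \<sigma> \<partial>kernel_measure M L \<gamma> \<omega>) = ennreal (\<gamma> A \<omega>)"
    if "\<omega> \<in> space (Fsig M (past L \<union> (Z - L)))" for \<omega>
    using AF KM_em[OF tL K, of \<omega> A] that by (simp add: KM_sets[OF tL K])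
  have m: "(\<lambda>\<omega>. ennreal (\<gamma> A \<omega>)) \<in> borel_measurable (Fsig M (past L \<union> (Z - L)))"
    using measurable_compose[OF KD[OF tL K Z1 Z2 set] measurable_ennreal] by (simp add: comp_def)
  show ?case by (rule meas_cong'[OF _ m]) (rule eq)
next
  case (mult u c)
  have "\<And>\<omega>. (\<integral>\<^sup>+\<sigma>. c * u \<sigma> \<partial>kernel_measure M L \<gamma> \<omega>) = c * (\<integral>\<^sup>+\<sigma>. u \<sigma> \<partial>kernel_measure M L \<gamma> \<omega>)"
    by (rule nn_integral_cmult) (rule KZ_meas[OF Z2 mult(2)])
  then show ?case using mult(4) by (simp add: borel_measurable_times_ennreal)
next
  case (add u v)
  have "\<And>\<omega>. (\<integral>\<^sup>+\<sigma>. v \<sigma> + u \<sigma> \<partial>kernel_measure M L \<gamma> \<omega>) = (\<integral>\<^sup>+\<sigma>. v \<sigma> \<partial>kernel_measure M L \<gamma> \<omega>) + (\<integral>\<^sup>+\<sigma>. u \<sigma> \<partial>kernel_measure M L \<gamma> \<omega>)"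
    by (intro nn_integral_add KZ_meas[OF Z2]) (use add in auto)
  then show ?case using add by (auto intro!: borel_measurable_add)
next
  case (seq U)
  have "\<And>\<omega>. (\<integral>\<^sup>+\<sigma>. (SUP i. U i) \<sigma> \<partial>kernel_measure M L \<gamma> \<omega>) = (SUP i. (\<integral>\<^sup>+\<sigma>. U i \<sigma> \<partial>kernel_measure M L \<gamma> \<omega>))"
    unfolding SUP_apply by (rule nn_integral_monotone_convergence_SUP) (use seq KZ_meas[OF Z2 seq(1)] in auto)
  then show ?case by (simp, intro borel_measurable_SUP) (use seq in auto)
qed

lemma KI:
  fixes f :: "('s \<Rightarrow> 'e) \<Rightarrow> real"
  assumes Z1: "L \<subseteq> Z" and Z2: "Z \<subseteq> - future L" and f: "f \<in> borel_measurable (Fsig M Z)"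
    and nn: "\<And>\<sigma>. \<sigma> \<in> Omega M \<Longrightarrow> 0 \<le> f \<sigma>"
  shows "(\<lambda>\<omega>. \<integral>\<sigma>. f \<sigma> \<partial>kernel_measure M L \<gamma> \<omega>) \<in> borel_measurable (Fsig M (past L \<union> (Z - L)))"
proof -
  have eq: "(\<lambda>\<omega>. \<integral>\<sigma>. f \<sigma> \<partial>kernel_measure M L \<gamma> \<omega>) = (\<lambda>\<omega>. enn2real (\<integral>\<^sup>+\<sigma>. ennreal (f \<sigma>) \<partial>kernel_measure M L \<gamma> \<omega>))"
    by (intro ext integral_eq_nn_integral KZ_meas[OF Z2 f] AE_I2) (simp add: nn KM_space[OF tL K])
  have fm: "(\<lambda>\<sigma>. ennreal (f \<sigma>)) \<in> borel_measurable (Fsig M Z)"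
    using measurable_compose[OF f measurable_ennreal] by (simp add: comp_def)
  show ?thesis unfolding eq by (rule borel_measurable_enn2real) (rule KI_nn[OF Z1 Z2 fm])
qed

end



lemma pastL_po:
  assumes tD: "time_box D" and tL: "time_box L" and DL: "D \<subseteq> outer (L::'s::order set)"
  shows "past L \<subseteq> past D \<union> outer D"
proof -
  have "past L \<inter> D = {}" using DL unfolding past_def outer_def by (auto dest: order.strict_implies_order)
  then have "past L \<subseteq> - future D - D" using pastL_nfD[OF tD tL DL] by auto
  then show ?thesis using compl_future_minus[of D] by auto
qed

context
  fixes M :: "'e measure" and D L :: "'s::order set"
    and \<gamma>D \<gamma>L :: "('s \<Rightarrow> 'e) set \<Rightarrow> ('s \<Rightarrow> 'e) \<Rightarrow> real"
  assumes tD: "time_box D" and tL: "time_box L" and DL: "D \<subseteq> outer L"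
    and KnD: "proper_oriented_kernel M D \<gamma>D" and KnL: "proper_oriented_kernel M L \<gamma>L"
begin

lemma VL: "- future (D \<union> L) \<subseteq> - future L" using fut_Un[OF tD tL DL] by auto

lemma C_meas: "A \<in> sets (Fsig M (- future (D \<union> L))) \<Longrightarrow>
    (\<lambda>\<sigma>. \<gamma>L A \<sigma>) \<in> borel_measurable (Fsig M (past L \<union> (- future (D \<union> L) - L)))"
  by (rule KD[OF tL KnL L_nfG[OF tD tL DL] VL])

lemma C_sets: "A \<in> sets (Fsig M (- future (D \<union> L))) \<Longrightarrow> A \<in> sets (Fsig M (- future L))"
  using Fsig_mono[OF VL] by auto

lemma C_bnd: "\<sigma> \<in> Omega M \<Longrightarrow> A \<in> sets (Fsig M (- future (D \<union> L))) \<Longrightarrow> 0 \<le> \<gamma>L A \<sigma> \<and> \<gamma>L A \<sigma> \<le> 1"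
  using K2[OF tL KnL] C_sets by blast

lemma C_measK: "A \<in> sets (Fsig M (- future (D \<union> L))) \<Longrightarrow>
    (\<lambda>\<sigma>. \<gamma>L A \<sigma>) \<in> borel_measurable (kernel_measure M D \<gamma>D \<omega>)"
  by (rule KZ_meas[OF tD KnD S3[OF tD tL DL] C_meas])

lemma C_int:
  assumes w: "\<omega> \<in> Omega M" and A: "A \<in> sets (Fsig M (- future (D \<union> L)))"
  shows "integrable (kernel_measure M D \<gamma>D \<omega>) (\<lambda>\<sigma>. \<gamma>L A \<sigma>)"
proof -
  interpret P: prob_space "kernel_measure M D \<gamma>D \<omega>" by (rule KM_prob[OF tD KnD w])
  show ?thesis
    by (rule P.integrable_const_bound[where B=1]) (use C_bnd[OF _ A] KM_space[OF tD KnD] C_measK[OF A] in auto)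
qed

lemma C_nn: "\<omega> \<in> Omega M \<Longrightarrow> A \<in> sets (Fsig M (- future (D \<union> L))) \<Longrightarrow>
    ennreal (kernel_comp M D \<gamma>D \<gamma>L A \<omega>) = (\<integral>\<^sup>+\<sigma>. ennreal (\<gamma>L A \<sigma>) \<partial>kernel_measure M D \<gamma>D \<omega>)"
  unfolding kernel_comp_def
  by (rule nn_integral_eq_integral[symmetric, OF C_int]) (use C_bnd KM_space[OF tD KnD] in \<open>auto intro!: AE_I2\<close>)

lemma C_proper: "proper_oriented_kernel M (D \<union> L) (kernel_comp M D \<gamma>D \<gamma>L)"
  unfolding proper_oriented_kernel_def
proof (intro conjI ballI)
  fix \<omega> :: "'s \<Rightarrow> 'e" assume w: "\<omega> \<in> Omega M"
  interpret P: prob_space "kernel_measure M D \<gamma>D \<omega>" by (rule KM_prob[OF tD KnD w])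
  show "measure_space (Omega M) (sets (Fsig M (- future (D \<union> L))))
          (\<lambda>A. ennreal (kernel_comp M D \<gamma>D \<gamma>L A \<omega>))"
    unfolding measure_space_def
  proof (intro conjI)
    show "sigma_algebra (Omega M) (sets (Fsig M (- future (D \<union> L))))"
      unfolding sets_Fsig by (rule sigma_algebra_sigma_sets[OF coord_gen_Pow])
    have e0: "\<gamma>L {} \<sigma> = 0" if "\<sigma> \<in> Omega M" for \<sigma>
      using KM_meas[OF tL KnL that, of "{}"] by simp
    have "kernel_comp M D \<gamma>D \<gamma>L {} \<omega> = (\<integral>\<sigma>. 0 \<partial>kernel_measure M D \<gamma>D \<omega>)"
      unfolding kernel_comp_def by (rule Bochner_Integration.integral_cong) (use e0 KM_space[OF tD KnD] in auto)
    then have "kernel_comp M D \<gamma>D \<gamma>L {} \<omega> = 0" by simp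
    then show "positive (sets (Fsig M (- future (D \<union> L)))) (\<lambda>A. ennreal (kernel_comp M D \<gamma>D \<gamma>L A \<omega>))"
      unfolding positive_def by simp
    show "countably_additive (sets (Fsig M (- future (D \<union> L)))) (\<lambda>A. ennreal (kernel_comp M D \<gamma>D \<gamma>L A \<omega>))"
      unfolding countably_additive_def
    proof (intro allI impI)
      fix A :: "nat \<Rightarrow> _"
      assume A: "range A \<subseteq> sets (Fsig M (- future (D \<union> L)))" and dA: "disjoint_family A"
        and UA: "\<Union> (range A) \<in> sets (Fsig M (- future (D \<union> L)))"
      have Ai: "A i \<in> sets (Fsig M (- future (D \<union> L)))" for i using A by auto
      have mi: "(\<lambda>\<sigma>. ennreal (\<gamma>L (A i) \<sigma>)) \<in> borel_measurable (kernel_measure M D \<gamma>D \<omega>)" for i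
        using measurable_compose[OF C_measK[OF Ai] measurable_ennreal] by (simp add: comp_def)
      have pt: "(\<Sum>i. ennreal (\<gamma>L (A i) \<sigma>)) = ennreal (\<gamma>L (\<Union> (range A)) \<sigma>)" if s: "\<sigma> \<in> Omega M" for \<sigma>
      proof -
        have "countably_additive (sets (Fsig M (- future L))) (\<lambda>B. ennreal (\<gamma>L B \<sigma>))"
          using K1[OF tL KnL s] unfolding measure_space_def by auto
        moreover have "range A \<subseteq> sets (Fsig M (- future L))" using Ai C_sets by auto
        moreover have "\<Union> (range A) \<in> sets (Fsig M (- future L))" using UA C_sets by auto
        ultimately show ?thesis using dA unfolding countably_additive_def by blast
      qed
      have "(\<Sum>i. ennreal (kernel_comp M D \<gamma>D \<gamma>L (A i) \<omega>))
          = (\<Sum>i. \<integral>\<^sup>+\<sigma>. ennreal (\<gamma>L (A i) \<sigma>) \<partial>kernel_measure M D \<gamma>D \<omega>)"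
        using C_nn[OF w Ai] by simp
      also have "\<dots> = (\<integral>\<^sup>+\<sigma>. (\<Sum>i. ennreal (\<gamma>L (A i) \<sigma>)) \<partial>kernel_measure M D \<gamma>D \<omega>)"
        by (rule nn_integral_suminf[symmetric]) (rule mi)
      also have "\<dots> = (\<integral>\<^sup>+\<sigma>. ennreal (\<gamma>L (\<Union> (range A)) \<sigma>) \<partial>kernel_measure M D \<gamma>D \<omega>)"
        by (intro nn_integral_cong) (simp add: pt KM_space[OF tD KnD])
      also have "\<dots> = ennreal (kernel_comp M D \<gamma>D \<gamma>L (\<Union> (range A)) \<omega>)"
        using C_nn[OF w UA] by simp
      finally show "(\<Sum>i. ennreal (kernel_comp M D \<gamma>D \<gamma>L (A i) \<omega>)) = ennreal (kernel_comp M D \<gamma>D \<gamma>L (\<Union> (range A)) \<omega>)" .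
    qed
  qed
  {
    fix A assume A: "A \<in> sets (Fsig M (- future (D \<union> L)))"
    show "0 \<le> kernel_comp M D \<gamma>D \<gamma>L A \<omega>"
      unfolding kernel_comp_def by (rule Bochner_Integration.integral_nonneg) (use C_bnd[OF _ A] KM_space[OF tD KnD] in auto)
    have "kernel_comp M D \<gamma>D \<gamma>L A \<omega> \<le> (\<integral>\<sigma>. 1 \<partial>kernel_measure M D \<gamma>D \<omega>)"
      unfolding kernel_comp_def
      by (rule Bochner_Integration.integral_mono[OF C_int[OF w A]]) (use C_bnd[OF _ A] KM_space[OF tD KnD] in auto)
    then show "kernel_comp M D \<gamma>D \<gamma>L A \<omega> \<le> 1"
      using P.prob_space by simp
  }
  have "kernel_comp M D \<gamma>D \<gamma>L (Omega M) \<omega> = (\<integral>\<sigma>. 1 \<partial>kernel_measure M D \<gamma>D \<omega>)"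
    unfolding kernel_comp_def by (rule Bochner_Integration.integral_cong) (use K3[OF tL KnL] KM_space[OF tD KnD] in auto)
  then show "kernel_comp M D \<gamma>D \<gamma>L (Omega M) \<omega> = 1" using P.prob_space by simp
next
  fix A assume A: "A \<in> sets (Fsig M (- future (D \<union> L)))"
  let ?Z = "D \<union> (past L \<union> (- future (D \<union> L) - L))"
  have f: "(\<lambda>\<sigma>. \<gamma>L A \<sigma>) \<in> borel_measurable (Fsig M ?Z)"
    by (rule meas_mono[OF C_meas[OF A]]) auto
  have Z2: "?Z \<subseteq> - future D" using S3[OF tD tL DL] self_nf[of D] by auto
  have "(\<lambda>\<omega>. \<integral>\<sigma>. \<gamma>L A \<sigma> \<partial>kernel_measure M D \<gamma>D \<omega>) \<in> borel_measurable (Fsig M (past D \<union> (?Z - D)))"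
    by (rule KI[OF tD KnD _ Z2 f]) (use C_bnd[OF _ A] in auto)
  then show "(\<lambda>\<omega>. kernel_comp M D \<gamma>D \<gamma>L A \<omega>) \<in> borel_measurable (Fsig M (past (D \<union> L) \<union> outer (D \<union> L)))"
    unfolding kernel_comp_def by (rule meas_mono) (rule S4[OF tD tL DL])
next
  fix A assume A: "A \<in> sets (Fsig M (D \<union> L))"
  let ?Z = "D \<union> (past L \<union> ((D \<union> L) - L))"
  have f0: "(\<lambda>\<sigma>. \<gamma>L A \<sigma>) \<in> borel_measurable (Fsig M (past L \<union> ((D \<union> L) - L)))"
    by (rule KD[OF tL KnL _ S5[OF tD tL DL] A]) auto
  have f: "(\<lambda>\<sigma>. \<gamma>L A \<sigma>) \<in> borel_measurable (Fsig M ?Z)"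
    by (rule meas_mono[OF f0]) auto
  have AV: "A \<in> sets (Fsig M (- future (D \<union> L)))"
    using A Fsig_mono[of "D \<union> L" "- future (D \<union> L)" M] L_nfG[OF tD tL DL] D_nfG[OF tD tL DL] by auto
  have "(\<lambda>\<omega>. \<integral>\<sigma>. \<gamma>L A \<sigma> \<partial>kernel_measure M D \<gamma>D \<omega>) \<in> borel_measurable (Fsig M (past D \<union> (?Z - D)))"
    by (rule KI[OF tD KnD _ S6[OF tD tL DL] f]) (use C_bnd[OF _ AV] in auto)
  then show "(\<lambda>\<omega>. kernel_comp M D \<gamma>D \<gamma>L A \<omega>) \<in> borel_measurable (Fsig M (past (D \<union> L)))"
    unfolding kernel_comp_def by (rule meas_mono) (rule S7[OF tD tL DL])
next
  fix B and \<omega> :: "'s \<Rightarrow> 'e" assume B: "B \<in> sets (Fsig M (past (D \<union> L) \<union> outer (D \<union> L)))" and w: "\<omega> \<in> Omega M"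
  have BL: "B \<in> sets (Fsig M (past L \<union> outer L))" using B Fsig_mono[OF S8[OF tD tL DL]] by auto
  have BD: "B \<in> sets (Fsig M (past D \<union> outer D))"
    using B Fsig_mono[OF S8[OF tL tD outer_sym[OF DL]]] by (auto simp: Un_commute)
  have BDf: "B \<in> sets (Fsig M (- future D))" using BD po_fut[OF tD KnD] by auto
  have "kernel_comp M D \<gamma>D \<gamma>L B \<omega> = (\<integral>\<sigma>. indicator B \<sigma> \<partial>kernel_measure M D \<gamma>D \<omega>)"
    unfolding kernel_comp_def by (rule Bochner_Integration.integral_cong) (use K6[OF tL KnL BL] KM_space[OF tD KnD] in auto)
  also have "\<dots> = measure (kernel_measure M D \<gamma>D \<omega>) B"
    using sets.sets_into_space[OF BDf] by (simp add: KM_space[OF tD KnD] Int_absorb2)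
  also have "\<dots> = \<gamma>D B \<omega>" by (rule KM_meas[OF tD KnD w BDf])
  also have "\<dots> = indicator B \<omega>" by (rule K6[OF tD KnD BD w])
  finally show "kernel_comp M D \<gamma>D \<gamma>L B \<omega> = indicator B \<omega>" .
qed

lemma C_rect:
  assumes a: "a \<in> sets (Fsig M D)" and b: "b \<in> sets (Fsig M L)"
    and c: "c \<in> sets (Fsig M (- future (D \<union> L) - (D \<union> L)))" and w: "\<omega> \<in> Omega M"
  shows "kernel_comp M D \<gamma>D \<gamma>L (a \<inter> b \<inter> c) \<omega> = \<gamma>D a \<omega> * \<gamma>L b \<omega> * indicator c \<omega>"
proof -
  define h where "h = (\<lambda>\<sigma>. \<gamma>L b \<sigma> * indicator c \<sigma>)"
  have bF: "b \<in> sets (Fsig M (- future L))" using b L_fut[OF tL KnL] by auto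
  have aL: "a \<in> sets (Fsig M (past L \<union> outer L))" using a Fsig_mono[OF D_po[OF tD tL DL]] by auto
  have cL: "c \<in> sets (Fsig M (past L \<union> outer L))" using c Fsig_mono[OF VG_po[OF tD tL DL]] by auto
  have cD: "c \<in> sets (Fsig M (past D \<union> outer D))"
    using c Fsig_mono[OF VG_po[OF tL tD outer_sym[OF DL]]] by (auto simp: Un_commute)
  have eq: "\<gamma>L (a \<inter> b \<inter> c) \<sigma> = indicator a \<sigma> * h \<sigma>" if s: "\<sigma> \<in> Omega M" for \<sigma>
  proof -
    have "a \<inter> b \<inter> c = b \<inter> (a \<inter> c)" by auto
    then have "\<gamma>L (a \<inter> b \<inter> c) \<sigma> = \<gamma>L b \<sigma> * indicator (a \<inter> c) \<sigma>"
      using KM_prod[OF tL KnL bF _ s, of "a \<inter> c"] aL cL by (simp add: sets.Int)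
    then show ?thesis unfolding h_def by (simp add: indicator_inter_arith)
  qed
  have hm: "h \<in> borel_measurable (Fsig M (past D \<union> outer D))"
  proof -
    have "(\<lambda>\<sigma>. \<gamma>L b \<sigma>) \<in> borel_measurable (Fsig M (past D \<union> outer D))"
      by (rule meas_mono[OF K5[OF tL KnL b] pastL_po[OF tD tL DL]])
    moreover have "(indicator c :: _ \<Rightarrow> real) \<in> borel_measurable (Fsig M (past D \<union> outer D))"
      using cD by (rule borel_measurable_indicator)
    ultimately show ?thesis unfolding h_def by (rule borel_measurable_times)
  qed
  have AE: "AE \<sigma> in kernel_measure M D \<gamma>D \<omega>. h \<sigma> = h \<omega>" by (rule KM_AE[OF tD KnD hm w])
  have aF: "a \<in> sets (kernel_measure M D \<gamma>D \<omega>)" using a L_fut[OF tD KnD] KM_sets[OF tD KnD] by auto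
  have hK: "h \<in> borel_measurable (kernel_measure M D \<gamma>D \<omega>)"
    by (rule KZ_meas[OF tD KnD po_sub[OF tD] hm])
  have "kernel_comp M D \<gamma>D \<gamma>L (a \<inter> b \<inter> c) \<omega> = (\<integral>\<sigma>. indicator a \<sigma> * h \<sigma> \<partial>kernel_measure M D \<gamma>D \<omega>)"
    unfolding kernel_comp_def by (rule Bochner_Integration.integral_cong) (use eq KM_space[OF tD KnD] in auto)
  also have "\<dots> = (\<integral>\<sigma>. indicator a \<sigma> * h \<omega> \<partial>kernel_measure M D \<gamma>D \<omega>)"
    by (rule integral_cong_AE) (use AE aF hK in auto)
  also have "\<dots> = measure (kernel_measure M D \<gamma>D \<omega>) a * h \<omega>"
    using sets.sets_into_space[OF aF] by (simp add: Int_absorb2)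
  also have "\<dots> = \<gamma>D a \<omega> * h \<omega>" using KM_meas[OF tD KnD w] a L_fut[OF tD KnD] by auto
  finally show ?thesis unfolding h_def by simp
qed

end



lemma comm:
  fixes M :: "'e measure" and D L :: "'s::order set"
    and \<gamma>D \<gamma>L :: "('s \<Rightarrow> 'e) set \<Rightarrow> ('s \<Rightarrow> 'e) \<Rightarrow> real"
  assumes tD: "time_box D" and tL: "time_box L" and DL: "D \<subseteq> outer L"
    and KnD: "proper_oriented_kernel M D \<gamma>D" and KnL: "proper_oriented_kernel M L \<gamma>L"
    and A: "A \<in> sets (Fsig M (- future (D \<union> L)))" and w: "\<omega> \<in> Omega M"
  shows "kernel_comp M D \<gamma>D \<gamma>L A \<omega> = kernel_comp M L \<gamma>L \<gamma>D A \<omega>"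
proof -
  have LD: "L \<subseteq> outer D" by (rule outer_sym[OF DL])
  let ?V = "- future (D \<union> L)"
  have UC: "L \<union> D = D \<union> L" by (rule Un_commute)
  have P1: "proper_oriented_kernel M (D \<union> L) (kernel_comp M D \<gamma>D \<gamma>L)"
    by (rule C_proper[OF tD tL DL KnD KnL])
  have P2: "proper_oriented_kernel M (D \<union> L) (kernel_comp M L \<gamma>L \<gamma>D)"
    using C_proper[OF tL tD LD KnL KnD] by (simp add: UC)
  have ms1: "measure_space (Omega M) (sets (Fsig M ?V)) (\<lambda>A. ennreal (kernel_comp M D \<gamma>D \<gamma>L A \<omega>))"
    using P1 w unfolding proper_oriented_kernel_def by auto
  have ms2: "measure_space (Omega M) (sets (Fsig M ?V)) (\<lambda>A. ennreal (kernel_comp M L \<gamma>L \<gamma>D A \<omega>))"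
    using P2 w unfolding proper_oriented_kernel_def by auto
  define \<mu>1 where "\<mu>1 = measure_of (Omega M) (sets (Fsig M ?V)) (\<lambda>A. ennreal (kernel_comp M D \<gamma>D \<gamma>L A \<omega>))"
  define \<mu>2 where "\<mu>2 = measure_of (Omega M) (sets (Fsig M ?V)) (\<lambda>A. ennreal (kernel_comp M L \<gamma>L \<gamma>D A \<omega>))"
  have em1: "emeasure \<mu>1 X = ennreal (kernel_comp M D \<gamma>D \<gamma>L X \<omega>)" if "X \<in> sets (Fsig M ?V)" for X
    unfolding \<mu>1_def using ms1 that by (intro emeasure_measure_of_sigma) (auto simp: measure_space_def)
  have em2: "emeasure \<mu>2 X = ennreal (kernel_comp M L \<gamma>L \<gamma>D X \<omega>)" if "X \<in> sets (Fsig M ?V)" for X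
    unfolding \<mu>2_def using ms2 that by (intro emeasure_measure_of_sigma) (auto simp: measure_space_def)
  have Veq: "?V = D \<union> L \<union> (?V - (D \<union> L))"
    using L_nfG[OF tD tL DL] D_nfG[OF tD tL DL] by auto
  have sV: "sets (Fsig M ?V) = sigma_sets (Omega M) (R3 M D L (?V - (D \<union> L)))"
    using R3_gen[of M D L "?V - (D \<union> L)"] Veq by simp
  have sm: "sets (measure_of (Omega M) (sets (Fsig M ?V)) \<mu>) = sets (Fsig M ?V)" for \<mu>
    using sets_measure_of[OF sets.space_closed[of "Fsig M ?V"]] sets.sigma_sets_eq[of "Fsig M ?V"] by simp
  have OmR: "Omega M \<in> R3 M D L (?V - (D \<union> L))"
    using R3I[OF Omega_in Omega_in Omega_in, of M D L "?V - (D \<union> L)"] by simp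
  have "\<mu>1 = \<mu>2"
  proof (rule measure_eqI_generator_eq[OF R3_Int_stable R3_Pow, where A="\<lambda>_. Omega M"])
    fix X assume X: "X \<in> R3 M D L (?V - (D \<union> L))"
    then obtain a b c where abc: "X = a \<inter> b \<inter> c" "a \<in> sets (Fsig M D)" "b \<in> sets (Fsig M L)"
      "c \<in> sets (Fsig M (?V - (D \<union> L)))" by (rule R3E)
    have XV: "X \<in> sets (Fsig M ?V)" using X sV by auto
    have "kernel_comp M D \<gamma>D \<gamma>L X \<omega> = \<gamma>D a \<omega> * \<gamma>L b \<omega> * indicator c \<omega>"
      using C_rect[OF tD tL DL KnD KnL abc(2,3,4) w] abc(1) by simp
    moreover have "kernel_comp M L \<gamma>L \<gamma>D X \<omega> = \<gamma>L b \<omega> * \<gamma>D a \<omega> * indicator c \<omega>"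
    proof -
      have "X = b \<inter> a \<inter> c" using abc(1) by auto
      moreover have "c \<in> sets (Fsig M (- future (L \<union> D) - (L \<union> D)))" using abc(4) by (simp add: UC)
      ultimately show ?thesis using C_rect[OF tL tD LD KnL KnD abc(3,2) _ w] by simp
    qed
    ultimately show "emeasure \<mu>1 X = emeasure \<mu>2 X" using em1[OF XV] em2[OF XV] by (simp add: mult.commute)
  next
    show "sets \<mu>1 = sigma_sets (Omega M) (R3 M D L (?V - (D \<union> L)))" unfolding \<mu>1_def sm by (rule sV)
  next
    show "sets \<mu>2 = sigma_sets (Omega M) (R3 M D L (?V - (D \<union> L)))" unfolding \<mu>2_def sm by (rule sV)
  next
    show "range (\<lambda>_. Omega M) \<subseteq> R3 M D L (?V - (D \<union> L))" using OmR by auto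
  next
    show "(\<Union>i::nat. Omega M) = Omega M" by simp
  next
    fix i :: nat
    show "emeasure \<mu>1 (Omega M) \<noteq> \<infinity>" using em1[OF Omega_in] by simp
  qed
  then have "ennreal (kernel_comp M D \<gamma>D \<gamma>L A \<omega>) = ennreal (kernel_comp M L \<gamma>L \<gamma>D A \<omega>)"
    using em1[OF A] em2[OF A] by simp
  moreover have "0 \<le> kernel_comp M D \<gamma>D \<gamma>L A \<omega>" "0 \<le> kernel_comp M L \<gamma>L \<gamma>D A \<omega>"
    using P1 P2 A w unfolding proper_oriented_kernel_def by auto
  ultimately show ?thesis by simp
qed

theorem mainTheorem17:
  fixes M :: "'e measure"
    and D L :: "'s::order set"
    and \<gamma>D \<gamma>L :: "('s \<Rightarrow> 'e) set \<Rightarrow> ('s \<Rightarrow> 'e) \<Rightarrow> real"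
  assumes "standing TYPE('s)"
    and "time_box D" and "time_box L"
    and "D \<subseteq> outer L"
    and "proper_oriented_kernel M D \<gamma>D"
    and "proper_oriented_kernel M L \<gamma>L"
  shows "(time_box (D \<union> L) \<and>
          future (D \<union> L) = future D \<union> future L \<and>
          past (D \<union> L) = past D \<union> past L)
       \<and> ((\<forall>A\<in>sets (Fsig M (- future (D \<union> L))). \<forall>\<omega>\<in>Omega M.
             (\<lambda>\<sigma>. \<gamma>L A \<sigma>) \<in> borel_measurable (kernel_measure M D \<gamma>D \<omega>) \<and>
             integrable (kernel_measure M D \<gamma>D \<omega>) (\<lambda>\<sigma>. \<gamma>L A \<sigma>))
          \<and> proper_oriented_kernel M (D \<union> L) (kernel_comp M D \<gamma>D \<gamma>L))
       \<and> (countable (space M) \<longrightarrow>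
          (\<forall>A\<in>sets (Fsig M (- future (D \<union> L))). \<forall>\<omega>\<in>Omega M.
             kernel_comp M D \<gamma>D \<gamma>L A \<omega> = kernel_comp M L \<gamma>L \<gamma>D A \<omega>))"
  using tb_Un[OF assms(2-4)] fut_Un[OF assms(2-4)] past_Un[OF assms(2-4)]
    C_measK[OF assms(2-6)] C_int[OF assms(2-6)] C_proper[OF assms(2-6)] comm[OF assms(2-6)]
  by blast



end
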